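(* Let $G=(V,E)$ be a finite graph without loops and $e=uv\in E$. Let $G/e$ denote the contraction of $e$: the vertices $u$ and $v$ are replaced by a single new vertex $w$, and the edges incident to $w$ are exactly the edges other than $e$ that were incident with $u$ or $v$ (so $G/e$ has one edge fewer than $G$). Then $$\gamma_{coe}(G)-2\leq \gamma_{coe}(G/e)\leq \gamma_{coe}(G).$$
   Context: Graphs have no loops. For a graph $G=(V,E)$ and $x\in V$, $\deg(x)$ is the number of edges incident to $x$. A set $D\subseteq V$ is a dominating set if every vertex of $V\setminus D$ is adjacent to at least one vertex of $D$. A dominating set $D$ is a co-even dominating set if $\deg(x)$ is even for every $x\in V\setminus D$ (degrees taken in the graph under consideration). The co-even domination number $\gamma_{coe}(G)$ is the minimum cardinality of a co-even dominating set of $G$. *)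

theory Defs
  imports Main
begin

(* A finite loopless multigraph: vertex set V, edge set E, and an incidence map
   ends assigning to every edge its set of two distinct endpoints. *)
definition loopless_graph :: "'v set \<Rightarrow> 'e set \<Rightarrow> ('e \<Rightarrow> 'v set) \<Rightarrow> bool" where
  "loopless_graph V E ends \<longleftrightarrow> finite V \<and> finite E \<and>
     (\<forall>a\<in>E. ends a \<subseteq> V \<and> card (ends a) = 2)"

definition deg :: "'e set \<Rightarrow> ('e \<Rightarrow> 'v set) \<Rightarrow> 'v \<Rightarrow> nat" where
  "deg E ends x = card {a\<in>E. x \<in> ends a}"

definition adjacent :: "'e set \<Rightarrow> ('e \<Rightarrow> 'v set) \<Rightarrow> 'v \<Rightarrow> 'v \<Rightarrow> bool" where
  "adjacent E ends x y \<longleftrightarrow> (\<exists>a\<in>E. ends a = {x, y} \<and> x \<noteq> y)"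

definition dominating_set :: "'v set \<Rightarrow> 'e set \<Rightarrow> ('e \<Rightarrow> 'v set) \<Rightarrow> 'v set \<Rightarrow> bool" where
  "dominating_set V E ends D \<longleftrightarrow> D \<subseteq> V \<and>
     (\<forall>x\<in>V - D. \<exists>y\<in>D. adjacent E ends x y)"

definition coeven_dominating_set :: "'v set \<Rightarrow> 'e set \<Rightarrow> ('e \<Rightarrow> 'v set) \<Rightarrow> 'v set \<Rightarrow> bool" where
  "coeven_dominating_set V E ends D \<longleftrightarrow> dominating_set V E ends D \<and>
     (\<forall>x\<in>V - D. even (deg E ends x))"

(* minimum cardinality of a co-even dominating set (V itself is one, so the set is nonempty) *)
definition gamma_coe :: "'v set \<Rightarrow> 'e set \<Rightarrow> ('e \<Rightarrow> 'v set) \<Rightarrow> nat" where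
  "gamma_coe V E ends = Min (card ` {D. coeven_dominating_set V E ends D})"

(* Contraction of edge e with endpoints u, v into the vertex w
   (w is either fresh or one of u, v). *)
definition merge_vertex :: "'v \<Rightarrow> 'v \<Rightarrow> 'v \<Rightarrow> 'v \<Rightarrow> 'v" where
  "merge_vertex u v w x = (if x = u \<or> x = v then w else x)"

definition contract_V :: "'v set \<Rightarrow> 'v \<Rightarrow> 'v \<Rightarrow> 'v \<Rightarrow> 'v set" where
  "contract_V V u v w = merge_vertex u v w ` V"

definition contract_E :: "'e set \<Rightarrow> 'e \<Rightarrow> 'e set" where
  "contract_E E e = E - {e}"

definition contract_ends :: "('e \<Rightarrow> 'v set) \<Rightarrow> 'v \<Rightarrow> 'v \<Rightarrow> 'v \<Rightarrow> 'e \<Rightarrow> 'v set" where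
  "contract_ends ends u v w a = merge_vertex u v w ` ends a"

end

theory Submission
  imports Defs
begin

lemma cds_finite:
  assumes "finite V"
  shows "finite {D. coeven_dominating_set V E ends D}"
  by (rule finite_subset[of _ "Pow V"])
     (auto simp: coeven_dominating_set_def dominating_set_def assms)

lemma gamma_le:
  assumes "finite V" "coeven_dominating_set V E ends D"
  shows "gamma_coe V E ends \<le> card D"
  unfolding gamma_coe_def using assms cds_finite[OF assms(1)]
  by (intro Min_le) auto

lemma gamma_ex:
  assumes "finite V"
  shows "\<exists>D. coeven_dominating_set V E ends D \<and> card D = gamma_coe V E ends"
proof -
  have "coeven_dominating_set V E ends V"
    by (auto simp: coeven_dominating_set_def dominating_set_def)
  then have "gamma_coe V E ends \<in> card ` {D. coeven_dominating_set V E ends D}"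
    unfolding gamma_coe_def using cds_finite[OF assms] by (intro Min_in) auto
  then show ?thesis by auto
qed

lemma sub2:
  assumes "card A = 2" "A \<subseteq> {p, q}"
  shows "A = {p, q}"
proof -
  have "card A \<le> card {p, q}" using assms(2) by (intro card_mono) auto
  then have "card {p, q} = card A" using assms(1)
    by (cases "p = q") auto
  then show ?thesis using assms(2) by (intro card_subset_eq) auto
qed

theorem mainTheorem6:
  fixes V :: "'v set" and E :: "'e set" and ends :: "'e \<Rightarrow> 'v set"
    and e :: 'e and u v w :: 'v
  assumes G: "loopless_graph V E ends"
    and e: "e \<in> E" "ends e = {u, v}"
    and w: "w \<notin> V - {u, v}"
    and noloop: "loopless_graph (contract_V V u v w) (contract_E E e) (contract_ends ends u v w)"
  shows "int (gamma_coe V E ends) - 2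
           \<le> int (gamma_coe (contract_V V u v w) (contract_E E e) (contract_ends ends u v w))
       \<and> gamma_coe (contract_V V u v w) (contract_E E e) (contract_ends ends u v w)
           \<le> gamma_coe V E ends"
proof -
  define m where "m = merge_vertex u v w"
  define V' where "V' = contract_V V u v w"
  define E' where "E' = contract_E E e"
  define ends' where "ends' = contract_ends ends u v w"
  have finV: "finite V" and finE: "finite E" and endsV: "\<And>a. a \<in> E \<Longrightarrow> ends a \<subseteq> V"
    and card2: "\<And>a. a \<in> E \<Longrightarrow> card (ends a) = 2"
    using G by (auto simp: loopless_graph_def)
  have finV': "finite V'" and card2': "\<And>a. a \<in> E' \<Longrightarrow> card (ends' a) = 2"
    using noloop by (auto simp: loopless_graph_def V'_def E'_def ends'_def)
  have E'_eq: "E' = E - {e}" by (simp add: E'_def contract_E_def)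
  have ends'_eq: "\<And>a. ends' a = m ` ends a" by (simp add: ends'_def m_def contract_ends_def)
  have V'_eq: "V' = m ` V" by (simp add: V'_def m_def contract_V_def)
  have uv: "u \<noteq> v" using card2[OF e(1)] e(2) by (auto simp: card_insert_if split: if_splits)
  have uV: "u \<in> V" and vV: "v \<in> V" using endsV[OF e(1)] e(2) by auto
  have mu: "m u = w" and mv: "m v = w" by (auto simp: m_def merge_vertex_def)
  have mo: "\<And>x. x \<noteq> u \<Longrightarrow> x \<noteq> v \<Longrightarrow> m x = x" by (auto simp: m_def merge_vertex_def)
  have memV': "\<And>x. x \<in> V' \<longleftrightarrow> x = w \<or> (x \<in> V \<and> x \<noteq> u \<and> x \<noteq> v)"
    using uV mu mv mo unfolding V'_eq by (auto simp: m_def merge_vertex_def image_iff)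
  have notboth: "\<And>a. a \<in> E \<Longrightarrow> a \<noteq> e \<Longrightarrow> \<not> (u \<in> ends a \<and> v \<in> ends a)"
  proof
    fix a assume a: "a \<in> E" "a \<noteq> e" "u \<in> ends a \<and> v \<in> ends a"
    have "ends a = {u, v}"
    proof -
      have "{u, v} \<subseteq> ends a" using a by auto
      moreover have "finite (ends a)" using card2[OF a(1)] card.infinite by fastforce
      moreover have "card {u, v} = card (ends a)" using card2[OF a(1)] uv by simp
      ultimately show ?thesis by (metis card_subset_eq)
    qed
    then have "ends' a = {w}" using mu mv by (simp add: ends'_eq)
    then show False using card2'[of a] a E'_eq by simp
  qed
  have wm: "\<And>a z. a \<in> E \<Longrightarrow> z \<in> ends a \<Longrightarrow> m z = w \<longleftrightarrow> z = u \<or> z = v"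
    using endsV w mo mu mv by (metis Diff_iff insertCI insertE singletonD subsetD)
  have xm: "\<And>a z x. a \<in> E \<Longrightarrow> z \<in> ends a \<Longrightarrow> x \<in> V \<Longrightarrow> x \<noteq> u \<Longrightarrow> x \<noteq> v \<Longrightarrow> m z = x \<longleftrightarrow> z = x"
    using endsV w mo mu mv by (metis Diff_iff insertCI insertE singletonD)
  have deg_o: "deg E' ends' x = deg E ends x" if x: "x \<in> V" "x \<noteq> u" "x \<noteq> v" for x
  proof -
    have *: "x \<in> m ` ends a \<longleftrightarrow> x \<in> ends a" if a: "a \<in> E" for a
    proof
      assume "x \<in> m ` ends a"
      then obtain z where "z \<in> ends a" "x = m z" by blast
      then show "x \<in> ends a" using xm[OF a _ x] by metis
    next
      assume "x \<in> ends a" then show "x \<in> m ` ends a" using mo[OF x(2,3)] by (metis imageI)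
    qed
    have "{a \<in> E'. x \<in> ends' a} = {a \<in> E. x \<in> ends a}"
      using x e * unfolding E'_eq ends'_eq by auto
    then show ?thesis by (simp add: deg_def)
  qed
  have deg_w: "deg E' ends' w + 2 = deg E ends u + deg E ends v"
  proof -
    let ?A = "{a \<in> E. u \<in> ends a}" and ?B = "{a \<in> E. v \<in> ends a}"
    have "{a \<in> E'. w \<in> ends' a} = (?A - {e}) \<union> (?B - {e})"
      using wm mu mv unfolding E'_eq ends'_eq by (auto simp: image_iff) (metis wm)+
    moreover have "(?A - {e}) \<inter> (?B - {e}) = {}" using notboth by auto
    moreover have "finite ?A" "finite ?B" using finE by auto
    ultimately have "deg E' ends' w = card (?A - {e}) + card (?B - {e})"
      by (simp add: deg_def card_Un_disjoint)
    moreover have "e \<in> ?A" "e \<in> ?B" using e by auto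
    moreover have "card (?A - {e}) = card ?A - 1" "card (?B - {e}) = card ?B - 1"
      using \<open>e \<in> ?A\<close> \<open>e \<in> ?B\<close> \<open>finite ?A\<close> \<open>finite ?B\<close> by (simp_all add: card_Diff_singleton)
    moreover have "card ?A > 0" "card ?B > 0"
      using \<open>e \<in> ?A\<close> \<open>e \<in> ?B\<close> \<open>finite ?A\<close> \<open>finite ?B\<close> by (auto simp: card_gt_0_iff)
    ultimately show ?thesis unfolding deg_def by linarith
  qed
  have up: "gamma_coe V' E' ends' \<le> gamma_coe V E ends"
  proof -
    obtain D where D: "coeven_dominating_set V E ends D" "card D = gamma_coe V E ends"
      using gamma_ex[OF finV] by blast
    have DV: "D \<subseteq> V" using D(1) by (simp add: coeven_dominating_set_def dominating_set_def)
    have "coeven_dominating_set V' E' ends' (m ` D)"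
      unfolding coeven_dominating_set_def dominating_set_def
    proof (intro conjI ballI)
      show "m ` D \<subseteq> V'" using DV V'_eq by auto
    next
      fix x assume x: "x \<in> V' - m ` D"
      show "\<exists>y\<in>m ` D. adjacent E' ends' x y"
      proof (cases "x = w")
        case True
        have uD: "u \<notin> D" using x True mu by (metis DiffD2 imageI)
        have vD: "v \<notin> D" using x True mv by (metis DiffD2 imageI)
        have "u \<in> V - D" using uD uV by blast
        then have "\<exists>y\<in>D. adjacent E ends u y"
          using D(1) unfolding coeven_dominating_set_def dominating_set_def by blast
        then obtain y a where y: "y \<in> D" "a \<in> E" "ends a = {u, y}" "u \<noteq> y"
          unfolding adjacent_def by blast
        have yv: "y \<noteq> v" using y vD by auto
        have ae: "a \<noteq> e" using y(3) e(2) yv uv by (metis doubleton_eq_iff)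
        have my: "m y = y" using mo y(4) yv by auto
        have yV: "y \<in> V" using y DV by auto
        have "ends' a = {w, y}" using y(3) mu my by (simp add: ends'_eq)
        moreover have "w \<noteq> y" using w yV y(4) yv by auto
        ultimately have "adjacent E' ends' x y" unfolding adjacent_def using True ae y(2) E'_eq by fastforce
        then show ?thesis using y(1) my by (metis imageI)
      next
        case False
        then have xV: "x \<in> V" "x \<noteq> u" "x \<noteq> v" using x memV' by auto
        have "x \<notin> D" using x mo[OF xV(2,3)] by (metis DiffD2 imageI)
        then have "x \<in> V - D" using xV by blast
        then have "\<exists>y\<in>D. adjacent E ends x y"
          using D(1) unfolding coeven_dominating_set_def dominating_set_def by blast
        then obtain y a where y: "y \<in> D" "a \<in> E" "ends a = {x, y}" "x \<noteq> y"
          unfolding adjacent_def by blast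
        have ae: "a \<noteq> e" using y(3) e(2) xV by auto
        have "m y \<noteq> x" using xm[OF y(2) _ xV] y(3,4) by auto
        moreover have "ends' a = {x, m y}" using y(3) mo[OF xV(2,3)] by (simp add: ends'_eq)
        ultimately have "adjacent E' ends' x (m y)" unfolding adjacent_def using ae y(2) E'_eq by fastforce
        then show ?thesis using y(1) by blast
      qed
    next
      fix x assume x: "x \<in> V' - m ` D"
      show "even (deg E' ends' x)"
      proof (cases "x = w")
        case True
        have uD: "u \<notin> D" using x True mu by (metis DiffD2 imageI)
        have vD: "v \<notin> D" using x True mv by (metis DiffD2 imageI)
        have "even (deg E ends u)" "even (deg E ends v)"
          using uD vD D(1) uV vV unfolding coeven_dominating_set_def by auto
        then show ?thesis using deg_w True by (metis even_add even_numeral)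
      next
        case False
        then have xV: "x \<in> V" "x \<noteq> u" "x \<noteq> v" using x memV' by auto
        have "x \<notin> D" using x mo[OF xV(2,3)] by (metis DiffD2 imageI)
        then show ?thesis using D(1) xV deg_o[OF xV] unfolding coeven_dominating_set_def by auto
      qed
    qed
    then show ?thesis using gamma_le[OF finV'] D(2) card_image_le DV finV
      by (metis finite_subset le_trans)
  qed
  have low: "gamma_coe V E ends \<le> gamma_coe V' E' ends' + 2"
  proof -
    obtain D' where D': "coeven_dominating_set V' E' ends' D'" "card D' = gamma_coe V' E' ends'"
      using gamma_ex[OF finV'] by blast
    have DV': "D' \<subseteq> V'" using D'(1) by (simp add: coeven_dominating_set_def dominating_set_def)
    have finD': "finite D'" using DV' finV' finite_subset by blast
    define D where "D = (D' - {w}) \<union> {u, v}"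
    have cardD: "card D \<le> card D' + 2"
    proof -
      have "card D \<le> card (D' - {w}) + card {u, v}" unfolding D_def by (rule card_Un_le)
      also have "\<dots> \<le> card D' + 2" using finD' card_Diff1_le[of D' w]
        by (simp add: card_insert_if)
      finally show ?thesis .
    qed
    have "coeven_dominating_set V E ends D"
      unfolding coeven_dominating_set_def dominating_set_def
    proof (intro conjI ballI)
      show "D \<subseteq> V" using DV' memV' uV vV unfolding D_def by auto
    next
      fix x assume x: "x \<in> V - D"
      then have xV: "x \<in> V" "x \<noteq> u" "x \<noteq> v" "x \<notin> D'" "x \<noteq> w"
        using w unfolding D_def by auto
      have xV': "x \<in> V'" using memV' xV by auto
      have "even (deg E' ends' x)" using D'(1) xV xV' unfolding coeven_dominating_set_def by auto
      then show "even (deg E ends x)" using deg_o[OF xV(1-3)] by simp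
    next
      fix x assume x: "x \<in> V - D"
      then have xV: "x \<in> V" "x \<noteq> u" "x \<noteq> v" "x \<notin> D'" "x \<noteq> w"
        using w unfolding D_def by auto
      have xV': "x \<in> V'" using memV' xV by auto
      have "x \<in> V' - D'" using xV xV' by blast
      then have "\<exists>y\<in>D'. adjacent E' ends' x y"
        using D'(1) unfolding coeven_dominating_set_def dominating_set_def by blast
      then obtain y a where y: "y \<in> D'" "a \<in> E'" "ends' a = {x, y}" "x \<noteq> y"
        unfolding adjacent_def by blast
      have aE: "a \<in> E" "a \<noteq> e" using y(2) E'_eq by auto
      have mimg: "m ` ends a = {x, y}" using y(3) ends'_eq by simp
      show "\<exists>y\<in>D. adjacent E ends x y"
      proof (cases "y = w")
        case False
        then have yV: "y \<in> V" "y \<noteq> u" "y \<noteq> v" using y(1) DV' memV' by auto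
        have "ends a \<subseteq> {x, y}"
        proof
          fix z assume z: "z \<in> ends a"
          then have "m z = x \<or> m z = y" using mimg by blast
          then show "z \<in> {x, y}" using xm[OF aE(1) z xV(1-3)] xm[OF aE(1) z yV] by auto
        qed
        then have "ends a = {x, y}" by (rule sub2[OF card2[OF aE(1)]])
        then have "adjacent E ends x y" unfolding adjacent_def using aE y(4) by blast
        moreover have "y \<in> D" using y(1) False unfolding D_def by auto
        ultimately show ?thesis by blast
      next
        case True
        have sub: "ends a \<subseteq> {x, u, v}"
        proof
          fix z assume z: "z \<in> ends a"
          then have "m z = x \<or> m z = w" using mimg True by blast
          then show "z \<in> {x, u, v}" using xm[OF aE(1) z xV(1-3)] wm[OF aE(1) z] by auto
        qed
        have nb: "\<not> (u \<in> ends a \<and> v \<in> ends a)" using notboth aE by blast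
        show ?thesis
        proof (cases "u \<in> ends a")
          case True
          then have "ends a \<subseteq> {x, u}" using sub nb by auto
          then have "ends a = {x, u}" by (rule sub2[OF card2[OF aE(1)]])
          then have "adjacent E ends x u" unfolding adjacent_def using aE xV by blast
          then show ?thesis unfolding D_def by blast
        next
          case False
          then have "ends a \<subseteq> {x, v}" using sub by auto
          then have "ends a = {x, v}" by (rule sub2[OF card2[OF aE(1)]])
          then have "adjacent E ends x v" unfolding adjacent_def using aE xV by blast
          then show ?thesis unfolding D_def by blast
        qed
      qed
    qed
    then show ?thesis using gamma_le[OF finV] cardD D'(2) by (metis le_trans)
  qed
  show ?thesis using up low unfolding V'_def E'_def ends'_def by simp
qed

end
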